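(* Let $\Phi$ be a Markov Logic Network and $n,m$ positive integers. Then $$M_{min}\, C_{n,m}\, Z(n)\,Z(m) \leq Z(n+m) \leq Z(n)\,Z(m)\,C_{n,m}\, M_{max},$$ where $M_{max} = \prod_{k \in [d]} (w^{max}_{k})^{ \binom{n+m}{k} - \binom{n}{k} - \binom{m}{k}}$ and $M_{min} = \prod_{k \in [d]} (w^{min}_{k})^{ \binom{n+m}{k} - \binom{n}{k} - \binom{m}{k}}$, and $C_{n,m}$ is the number of ways in which an interpretation on $[n]$ and an interpretation on $\{n+1,\dots,n+m\}$ can be extended to an interpretation on $[n+m]$.
   Context: Fix a finite function-free relational first-order signature $\mathcal{R}$. For a positive integer $N$ write $[N]=\{1,\dots,N\}$. For a finite set $D$ of constants, a ground atom over $D$ is $R(a_1,\dots,a_r)$ with $R\in\mathcal{R}$ of arity $r$ and $a_1,\dots,a_r\in D$. An interpretation on $D$ is a map assigning true/false to every ground atom over $D$; $\Omega^{(N)}$ is the set of interpretations on $[N]$. For an interpretation $\omega$ on $D$ and $I\subseteq D$, $\omega\downarrow I$ is the restriction of $\omega$ to the ground atoms all of whose arguments lie in $I$. The number $C_{n,m}$ of interpretations $\omega$ on $[n+m]$ with $\omega\downarrow[n]=\omega'$ and $\omega\downarrow\{n+1,\dots,n+m\}=\omega''$ is the same for every pair $(\omega',\omega'')$ (it equals $2$ to the number of ground atoms over $[n+m]$ having arguments in both $[n]$ and $\{n+1,\dots,n+m\}$). A Markov Logic Network (MLN) $\Phi$ is a finite set of pairs $(\phi_i,a_i)$, where $\phi_i$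 is a function-free, quantifier-free first-order formula over $\mathcal{R}$ and $a_i\in\mathbb{R}$. The arity of $\phi_i$ is the number of distinct variables in it; $\Phi_k$ is the set of pairs whose formula has arity $k$; $d$ is the largest arity. Convention: a formula with $k$ variables is grounded only by substituting $k$ pairwise distinct constants for its variables; for an interpretation $\omega$ on a finite set $D$, $N(\phi,\omega)$ is the number of injective assignments of the variables of $\phi$ to elements of $D$ under which $\phi$ is true in $\omega$. The weight of an interpretation $\omega$ is $w(\omega)=\exp\bigl(\sum_{(\phi_i,a_i)\in\Phi}a_iN(\phi_i,\omega)\bigr)$ and its $k$-weight is $w_k(\omega)=\exp\bigl(\sum_{(\phi_i,a_i)\in\Phi_k}a_iN(\phi_i,\omega)\bigr)$. $w_k^{max}$ and $w_k^{min}$ denote the maximum and minimum of $w_k(\omega')$ over all interpretations $\omega'$ on a $k$-element domain. The partition function is $Z(N)=\sum_{\omega\in\Omega^{(N)}}w(\omega)$. Binomial coefficients $\binom{a}{k}$ with $k>a$ are $0$. *)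

theory Defs
  imports Complex_Main "HOL-Library.FuncSet"
begin

datatype 'r fo =
    Tru
  | Atom 'r "nat list"
  | Eq nat nat
  | Neg "'r fo"
  | Conj "'r fo" "'r fo"
  | Disj "'r fo" "'r fo"

fun fvars :: "'r fo \<Rightarrow> nat set" where
  "fvars Tru = {}"
| "fvars (Atom R xs) = set xs"
| "fvars (Eq x y) = {x, y}"
| "fvars (Neg f) = fvars f"
| "fvars (Conj f g) = fvars f \<union> fvars g"
| "fvars (Disj f g) = fvars f \<union> fvars g"

fun wf_fo :: "'r set \<Rightarrow> ('r \<Rightarrow> nat) \<Rightarrow> 'r fo \<Rightarrow> bool" where
  "wf_fo Rs ar Tru = True"
| "wf_fo Rs ar (Atom R xs) = (R \<in> Rs \<and> length xs = ar R)"
| "wf_fo Rs ar (Eq x y) = True"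
| "wf_fo Rs ar (Neg f) = wf_fo Rs ar f"
| "wf_fo Rs ar (Conj f g) = (wf_fo Rs ar f \<and> wf_fo Rs ar g)"
| "wf_fo Rs ar (Disj f g) = (wf_fo Rs ar f \<and> wf_fo Rs ar g)"

definition farity :: "'r fo \<Rightarrow> nat" where
  "farity f = card (fvars f)"

definition ground_atoms :: "'r set \<Rightarrow> ('r \<Rightarrow> nat) \<Rightarrow> nat set \<Rightarrow> ('r \<times> nat list) set" where
  "ground_atoms Rs ar D = {(R, xs). R \<in> Rs \<and> length xs = ar R \<and> set xs \<subseteq> D}"

text \<open>An interpretation on D is represented by the set of its true ground atoms over D.\<close>
definition interps :: "'r set \<Rightarrow> ('r \<Rightarrow> nat) \<Rightarrow> nat set \<Rightarrow> ('r \<times> nat list) set set" where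
  "interps Rs ar D = Pow (ground_atoms Rs ar D)"

definition restr :: "'r set \<Rightarrow> ('r \<Rightarrow> nat) \<Rightarrow> ('r \<times> nat list) set \<Rightarrow> nat set \<Rightarrow> ('r \<times> nat list) set" where
  "restr Rs ar \<omega> I = \<omega> \<inter> ground_atoms Rs ar I"

fun holds :: "('r \<times> nat list) set \<Rightarrow> (nat \<Rightarrow> nat) \<Rightarrow> 'r fo \<Rightarrow> bool" where
  "holds \<omega> \<sigma> Tru = True"
| "holds \<omega> \<sigma> (Atom R xs) = ((R, map \<sigma> xs) \<in> \<omega>)"
| "holds \<omega> \<sigma> (Eq x y) = (\<sigma> x = \<sigma> y)"
| "holds \<omega> \<sigma> (Neg f) = (\<not> holds \<omega> \<sigma> f)"
| "holds \<omega> \<sigma> (Conj f g) = (holds \<omega> \<sigma> f \<and> holds \<omega> \<sigma> g)"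
| "holds \<omega> \<sigma> (Disj f g) = (holds \<omega> \<sigma> f \<or> holds \<omega> \<sigma> g)"

definition ncount :: "nat set \<Rightarrow> 'r fo \<Rightarrow> ('r \<times> nat list) set \<Rightarrow> nat" where
  "ncount D f \<omega> = card {\<sigma> \<in> fvars f \<rightarrow>\<^sub>E D. inj_on \<sigma> (fvars f) \<and> holds \<omega> \<sigma> f}"

definition weight :: "('r fo \<times> real) set \<Rightarrow> nat set \<Rightarrow> ('r \<times> nat list) set \<Rightarrow> real" where
  "weight \<Phi> D \<omega> = exp (\<Sum>p\<in>\<Phi>. snd p * real (ncount D (fst p) \<omega>))"

definition Phi_k :: "('r fo \<times> real) set \<Rightarrow> nat \<Rightarrow> ('r fo \<times> real) set" where
  "Phi_k \<Phi> k = {p \<in> \<Phi>. farity (fst p) = k}"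

definition kweight :: "('r fo \<times> real) set \<Rightarrow> nat \<Rightarrow> nat set \<Rightarrow> ('r \<times> nat list) set \<Rightarrow> real" where
  "kweight \<Phi> k D \<omega> = weight (Phi_k \<Phi> k) D \<omega>"

definition wmax :: "'r set \<Rightarrow> ('r \<Rightarrow> nat) \<Rightarrow> ('r fo \<times> real) set \<Rightarrow> nat \<Rightarrow> real" where
  "wmax Rs ar \<Phi> k = Max (kweight \<Phi> k {1..k} ` interps Rs ar {1..k})"

definition wmin :: "'r set \<Rightarrow> ('r \<Rightarrow> nat) \<Rightarrow> ('r fo \<times> real) set \<Rightarrow> nat \<Rightarrow> real" where
  "wmin Rs ar \<Phi> k = Min (kweight \<Phi> k {1..k} ` interps Rs ar {1..k})"

definition max_arity :: "('r fo \<times> real) set \<Rightarrow> nat" where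
  "max_arity \<Phi> = Max ({0} \<union> (\<lambda>p. farity (fst p)) ` \<Phi>)"

definition Zpart :: "'r set \<Rightarrow> ('r \<Rightarrow> nat) \<Rightarrow> ('r fo \<times> real) set \<Rightarrow> nat \<Rightarrow> real" where
  "Zpart Rs ar \<Phi> N = (\<Sum>\<omega>\<in>interps Rs ar {1..N}. weight \<Phi> {1..N} \<omega>)"

text \<open>C_{n,m}: number of interpretations on [n+m] extending a given pair of interpretations on
  [n] and on {n+1..n+m} (independent of the pair; we take the pair of empty interpretations).\<close>
definition Cnm :: "'r set \<Rightarrow> ('r \<Rightarrow> nat) \<Rightarrow> nat \<Rightarrow> nat \<Rightarrow> nat" where
  "Cnm Rs ar n m = card {\<omega> \<in> interps Rs ar {1..n+m}.
      restr Rs ar \<omega> {1..n} = {} \<and> restr Rs ar \<omega> {n+1..n+m} = {}}"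

definition Mmax :: "'r set \<Rightarrow> ('r \<Rightarrow> nat) \<Rightarrow> ('r fo \<times> real) set \<Rightarrow> nat \<Rightarrow> nat \<Rightarrow> real" where
  "Mmax Rs ar \<Phi> n m = (\<Prod>k\<in>{1..max_arity \<Phi>}.
      wmax Rs ar \<Phi> k ^ ((n+m choose k) - (n choose k) - (m choose k)))"

definition Mmin :: "'r set \<Rightarrow> ('r \<Rightarrow> nat) \<Rightarrow> ('r fo \<times> real) set \<Rightarrow> nat \<Rightarrow> nat \<Rightarrow> real" where
  "Mmin Rs ar \<Phi> n m = (\<Prod>k\<in>{1..max_arity \<Phi>}.
      wmin Rs ar \<Phi> k ^ ((n+m choose k) - (n choose k) - (m choose k)))"

end

theory Submission
  imports Defs "HOL-Library.FuncSet"
begin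

definition ren :: "(nat \<Rightarrow> nat) \<Rightarrow> ('r \<times> nat list) set \<Rightarrow> ('r \<times> nat list) set" where
  "ren h \<omega> = (\<lambda>(R, xs). (R, map h xs)) ` \<omega>"

lemma finite_fvars: "finite (fvars f)"
  by (induct f) auto

lemma holds_cong: "(\<forall>x\<in>fvars f. \<sigma> x = \<tau> x) \<Longrightarrow> holds \<omega> \<sigma> f = holds \<omega> \<tau> f"
  by (induct f) (auto cong: map_cong)

lemma holds_restr:
  assumes "\<omega> \<subseteq> ground_atoms Rs ar X" "\<sigma> ` fvars f \<subseteq> S"
  shows "holds (restr Rs ar \<omega> S) \<sigma> f = holds \<omega> \<sigma> f"
  using assms(2)
proof (induct f)
  case (Atom R xs)
  then show ?case using assms(1) by (auto simp: restr_def ground_atoms_def)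
qed auto

lemma holds_ren:
  assumes "inj_on h D" "\<omega> \<subseteq> ground_atoms Rs ar D" "\<sigma> ` fvars f \<subseteq> D"
  shows "holds (ren h \<omega>) (h \<circ> \<sigma>) f = holds \<omega> \<sigma> f"
  using assms(3)
proof (induct f)
  case (Atom R xs)
  have "(R, map h (map \<sigma> xs)) \<in> ren h \<omega> \<longleftrightarrow> (R, map \<sigma> xs) \<in> \<omega>"
  proof
    assume "(R, map h (map \<sigma> xs)) \<in> ren h \<omega>"
    then obtain ys where ys: "(R, ys) \<in> \<omega>" "map h ys = map h (map \<sigma> xs)"
      by (auto simp: ren_def)
    have "set ys \<subseteq> D" using ys(1) assms(2) by (auto simp: ground_atoms_def)
    moreover have "set (map \<sigma> xs) \<subseteq> D" using Atom by auto
    ultimately have "ys = map \<sigma> xs" using ys(2) assms(1)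
      by (metis inj_on_map_eq_map inj_on_subset le_sup_iff)
    then show "(R, map \<sigma> xs) \<in> \<omega>" using ys(1) by simp
  next
    assume "(R, map \<sigma> xs) \<in> \<omega>"
    then show "(R, map h (map \<sigma> xs)) \<in> ren h \<omega>" unfolding ren_def by force
  qed
  then show ?case by (simp add: comp_def)
next
  case (Eq x y)
  then show ?case using assms(1) by (auto dest: inj_onD)
qed auto

lemma ncount_ren:
  assumes h: "inj_on h D" and om: "\<omega> \<subseteq> ground_atoms Rs ar D"
  shows "ncount (h ` D) f (ren h \<omega>) = ncount D f \<omega>"
proof -
  let ?V = "fvars f"
  let ?T = "{\<sigma> \<in> ?V \<rightarrow>\<^sub>E D. inj_on \<sigma> ?V \<and> holds \<omega> \<sigma> f}"
  let ?T' = "{\<sigma> \<in> ?V \<rightarrow>\<^sub>E h ` D. inj_on \<sigma> ?V \<and> holds (ren h \<omega>) \<sigma> f}"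
  let ?g = "inv_into D h"
  have "bij_betw (\<lambda>\<sigma>. restrict (h \<circ> \<sigma>) ?V) ?T ?T'"
  proof (rule bij_betw_byWitness[where f' = "\<lambda>\<tau>. restrict (?g \<circ> \<tau>) ?V"])
    show "\<forall>a\<in>?T. restrict (?g \<circ> restrict (h \<circ> a) ?V) ?V = a"
    proof
      fix a assume a: "a \<in> ?T"
      show "restrict (?g \<circ> restrict (h \<circ> a) ?V) ?V = a"
      proof
        fix x show "restrict (?g \<circ> restrict (h \<circ> a) ?V) ?V x = a x"
          using a h by (cases "x \<in> ?V") (auto simp: PiE_def extensional_def Pi_def inv_into_f_f)
      qed
    qed
    show "\<forall>a\<in>?T'. restrict (h \<circ> restrict (?g \<circ> a) ?V) ?V = a"
    proof
      fix a assume a: "a \<in> ?T'"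
      show "restrict (h \<circ> restrict (?g \<circ> a) ?V) ?V = a"
      proof
        fix x show "restrict (h \<circ> restrict (?g \<circ> a) ?V) ?V x = a x"
          using a h by (cases "x \<in> ?V") (auto simp: PiE_def extensional_def Pi_def f_inv_into_f)
      qed
    qed
    show "(\<lambda>\<sigma>. restrict (h \<circ> \<sigma>) ?V) ` ?T \<subseteq> ?T'"
    proof (rule image_subsetI)
      fix \<sigma> assume "\<sigma> \<in> ?T"
      then have s: "\<sigma> \<in> ?V \<rightarrow>\<^sub>E D" "inj_on \<sigma> ?V" "holds \<omega> \<sigma> f" by auto
      have 1: "restrict (h \<circ> \<sigma>) ?V \<in> ?V \<rightarrow>\<^sub>E h ` D" using s by auto
      have 2: "inj_on (restrict (h \<circ> \<sigma>) ?V) ?V"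
        using s h unfolding inj_on_def by (auto simp: PiE_def Pi_def)
      have "holds (ren h \<omega>) (restrict (h \<circ> \<sigma>) ?V) f = holds (ren h \<omega>) (h \<circ> \<sigma>) f"
        by (rule holds_cong) auto
      also have "\<dots> = holds \<omega> \<sigma> f" using holds_ren[OF h om] s by auto
      finally have 3: "holds (ren h \<omega>) (restrict (h \<circ> \<sigma>) ?V) f" using s by simp
      show "restrict (h \<circ> \<sigma>) ?V \<in> ?T'" using 1 2 3 by blast
    qed
    show "(\<lambda>\<tau>. restrict (?g \<circ> \<tau>) ?V) ` ?T' \<subseteq> ?T"
    proof (rule image_subsetI)
      fix \<tau> assume "\<tau> \<in> ?T'"
      then have s: "\<tau> \<in> ?V \<rightarrow>\<^sub>E h ` D" "inj_on \<tau> ?V" "holds (ren h \<omega>) \<tau> f" by auto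
      have 1: "restrict (?g \<circ> \<tau>) ?V \<in> ?V \<rightarrow>\<^sub>E D" using s by (auto simp: PiE_def Pi_def intro!: inv_into_into)
      have 2: "inj_on (restrict (?g \<circ> \<tau>) ?V) ?V"
        using s h unfolding inj_on_def by (auto simp: PiE_def Pi_def) (metis inv_into_injective)
      have r: "restrict (?g \<circ> \<tau>) ?V ` ?V \<subseteq> D" using s by (auto simp: PiE_def Pi_def intro!: inv_into_into)
      have "holds \<omega> (restrict (?g \<circ> \<tau>) ?V) f = holds (ren h \<omega>) (h \<circ> restrict (?g \<circ> \<tau>) ?V) f"
        using holds_ren[OF h om r] by simp
      also have "\<dots> = holds (ren h \<omega>) \<tau> f"
        by (rule holds_cong) (use s in \<open>auto simp: PiE_def Pi_def f_inv_into_f\<close>)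
      finally have 3: "holds \<omega> (restrict (?g \<circ> \<tau>) ?V) f" using s by simp
      show "restrict (?g \<circ> \<tau>) ?V \<in> ?T" using 1 2 3 by blast
    qed
  qed
  then show ?thesis unfolding ncount_def by (rule bij_betw_same_card[symmetric])
qed

lemma weight_ren:
  assumes "inj_on h D" "\<omega> \<subseteq> ground_atoms Rs ar D"
  shows "weight \<Phi> (h ` D) (ren h \<omega>) = weight \<Phi> D \<omega>"
  unfolding weight_def using ncount_ren[OF assms] by simp

lemma ga_ren:
  assumes h: "inj_on h D"
  shows "bij_betw (\<lambda>(R, xs). (R, map h xs)) (ground_atoms Rs ar D) (ground_atoms Rs ar (h ` D))"
proof (rule bij_betw_byWitness[where f' = "\<lambda>(R, xs). (R, map (inv_into D h) xs)"])
  show "\<forall>a\<in>ground_atoms Rs ar D. (\<lambda>(R, xs). (R, map (inv_into D h) xs)) ((\<lambda>(R, xs). (R, map h xs)) a) = a"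
    using h by (auto simp: ground_atoms_def map_idI subset_iff inv_into_f_f)
  show "\<forall>a\<in>ground_atoms Rs ar (h ` D). (\<lambda>(R, xs). (R, map h xs)) ((\<lambda>(R, xs). (R, map (inv_into D h) xs)) a) = a"
    using h by (auto simp: ground_atoms_def map_idI subset_iff f_inv_into_f)
  show "(\<lambda>(R, xs). (R, map h xs)) ` ground_atoms Rs ar D \<subseteq> ground_atoms Rs ar (h ` D)"
    by (auto simp: ground_atoms_def subset_iff)
  show "(\<lambda>(R, xs). (R, map (inv_into D h) xs)) ` ground_atoms Rs ar (h ` D) \<subseteq> ground_atoms Rs ar D"
    by (auto simp: ground_atoms_def subset_iff intro!: inv_into_into)
qed

lemma ren_bij:
  assumes h: "inj_on h D"
  shows "bij_betw (ren h) (interps Rs ar D) (interps Rs ar (h ` D))"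
proof -
  have "bij_betw (image (\<lambda>(R, xs). (R, map h xs))) (interps Rs ar D) (interps Rs ar (h ` D))"
    unfolding interps_def by (rule bij_betw_image_Pow[OF ga_ren[OF h]])
  moreover have "image (\<lambda>(R, xs). (R, map h xs)) = ren h" by (rule ext) (simp add: ren_def)
  ultimately show ?thesis by metis
qed

definition G :: "('r fo \<times> real) set \<Rightarrow> nat set \<Rightarrow> ('r \<times> nat list) set \<Rightarrow> real" where
  "G \<Phi> S \<nu> = (\<Sum>p\<in>Phi_k \<Phi> (card S). snd p * real (ncount S (fst p) \<nu>))"

lemma kweight_G: "kweight \<Phi> (card S) S \<nu> = exp (G \<Phi> S \<nu>)"
  unfolding kweight_def weight_def G_def ..

lemma ncount_decomp:
  assumes D: "finite D" and om: "\<omega> \<subseteq> ground_atoms Rs ar X"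
  shows "ncount D f \<omega> = (\<Sum>S\<in>{S. S \<subseteq> D \<and> card S = farity f}. ncount S f (restr Rs ar \<omega> S))"
proof -
  let ?V = "fvars f"
  let ?T = "{\<sigma> \<in> ?V \<rightarrow>\<^sub>E D. inj_on \<sigma> ?V \<and> holds \<omega> \<sigma> f}"
  let ?K = "{S. S \<subseteq> D \<and> card S = farity f}"
  have fT: "finite ?T" using D finite_fvars[of f] by (intro finite_subset[OF _ finite_PiE[of ?V "\<lambda>_. D"]]) auto
  have fK: "finite ?K" using D by auto
  have img: "(\<lambda>\<sigma>. \<sigma> ` ?V) ` ?T \<subseteq> ?K"
    using card_image by (auto simp: farity_def)
  have "card ?T = (\<Sum>\<sigma>\<in>?T. 1)" by simp
  also have "\<dots> = (\<Sum>S\<in>?K. \<Sum>\<sigma>\<in>{\<sigma>. \<sigma> \<in> ?T \<and> \<sigma> ` ?V = S}. 1)"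
    by (rule sum.group[OF fT fK img, symmetric])
  also have "\<dots> = (\<Sum>S\<in>?K. ncount S f (restr Rs ar \<omega> S))"
  proof (rule sum.cong[OF refl])
    fix S assume S: "S \<in> ?K"
    have "{\<sigma>. \<sigma> \<in> ?T \<and> \<sigma> ` ?V = S} = {\<sigma> \<in> ?V \<rightarrow>\<^sub>E S. inj_on \<sigma> ?V \<and> holds (restr Rs ar \<omega> S) \<sigma> f}"
    proof (intro set_eqI iffI)
      fix \<sigma> assume "\<sigma> \<in> {\<sigma>. \<sigma> \<in> ?T \<and> \<sigma> ` ?V = S}"
      then show "\<sigma> \<in> {\<sigma> \<in> ?V \<rightarrow>\<^sub>E S. inj_on \<sigma> ?V \<and> holds (restr Rs ar \<omega> S) \<sigma> f}"
        using holds_restr[OF om, of \<sigma> f S] by auto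
    next
      fix \<sigma> assume s: "\<sigma> \<in> {\<sigma> \<in> ?V \<rightarrow>\<^sub>E S. inj_on \<sigma> ?V \<and> holds (restr Rs ar \<omega> S) \<sigma> f}"
      have sub: "\<sigma> ` ?V \<subseteq> S" using s by auto
      have "card (\<sigma> ` ?V) = card S" using s S card_image by (auto simp: farity_def)
      then have eq: "\<sigma> ` ?V = S" using sub S D by (metis (no_types, lifting) card_subset_eq finite_subset mem_Collect_eq)
      show "\<sigma> \<in> {\<sigma>. \<sigma> \<in> ?T \<and> \<sigma> ` ?V = S}"
        using s S eq holds_restr[OF om, of \<sigma> f S] by auto
    qed
    then show "(\<Sum>\<sigma>\<in>{\<sigma>. \<sigma> \<in> ?T \<and> \<sigma> ` ?V = S}. 1) = ncount S f (restr Rs ar \<omega> S)"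
      by (simp add: ncount_def)
  qed
  finally show ?thesis by (simp add: ncount_def)
qed

lemma weight_decomp:
  assumes P: "finite \<Phi>" and D: "finite D" and om: "\<omega> \<subseteq> ground_atoms Rs ar X"
  shows "weight \<Phi> D \<omega> = exp (\<Sum>S\<in>Pow D. G \<Phi> S (restr Rs ar \<omega> S))"
proof -
  have "(\<Sum>p\<in>\<Phi>. snd p * real (ncount D (fst p) \<omega>))
      = (\<Sum>p\<in>\<Phi>. \<Sum>S\<in>Pow D. if card S = farity (fst p) then snd p * real (ncount S (fst p) (restr Rs ar \<omega> S)) else 0)"
  proof (rule sum.cong[OF refl])
    fix p assume "p \<in> \<Phi>"
    have e: "{S. S \<subseteq> D \<and> card S = farity (fst p)} = {S \<in> Pow D. card S = farity (fst p)}" by auto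
    show "snd p * real (ncount D (fst p) \<omega>) = (\<Sum>S\<in>Pow D. if card S = farity (fst p) then snd p * real (ncount S (fst p) (restr Rs ar \<omega> S)) else 0)"
      unfolding ncount_decomp[OF D om, of "fst p"] e
      by (simp add: sum.inter_filter[symmetric] D sum_distrib_left)
  qed
  also have "\<dots> = (\<Sum>S\<in>Pow D. \<Sum>p\<in>\<Phi>. if card S = farity (fst p) then snd p * real (ncount S (fst p) (restr Rs ar \<omega> S)) else 0)"
    by (rule sum.swap)
  also have "\<dots> = (\<Sum>S\<in>Pow D. G \<Phi> S (restr Rs ar \<omega> S))"
    unfolding G_def Phi_k_def
    by (rule sum.cong[OF refl]) (simp add: sum.inter_filter[OF P] eq_commute)
  finally show ?thesis unfolding weight_def by simp
qed

lemma Phi_k_zero: "\<forall>p\<in>\<Phi>. farity (fst p) \<ge> 1 \<Longrightarrow> Phi_k \<Phi> 0 = {}"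
  by (auto simp: Phi_k_def)

lemma Phi_k_big: "finite \<Phi> \<Longrightarrow> k > max_arity \<Phi> \<Longrightarrow> Phi_k \<Phi> k = {}"
proof -
  assume f: "finite \<Phi>" and k: "k > max_arity \<Phi>"
  { fix p assume p: "p \<in> \<Phi>" "farity (fst p) = k"
    have "farity (fst p) \<le> max_arity \<Phi>" unfolding max_arity_def
      using f p by (intro Max_ge) auto
    with p k have False by simp }
  then show ?thesis unfolding Phi_k_def by blast
qed

lemma G_empty: "\<forall>p\<in>\<Phi>. farity (fst p) \<ge> 1 \<Longrightarrow> G \<Phi> {} \<nu> = 0"
  by (simp add: G_def Phi_k_zero)

lemma restr_sub: "restr Rs ar \<omega> A \<subseteq> ground_atoms Rs ar A"
  by (auto simp: restr_def)

lemma restr_restr: "S \<subseteq> A \<Longrightarrow> restr Rs ar (restr Rs ar \<omega> A) S = restr Rs ar \<omega> S"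
  by (auto simp: restr_def ground_atoms_def)

lemma weight_split:
  assumes P: "finite \<Phi>" and fA: "finite A" and fB: "finite B" and AB: "A \<inter> B = {}"
    and om: "\<omega> \<subseteq> ground_atoms Rs ar (A \<union> B)" and ar1: "\<forall>p\<in>\<Phi>. farity (fst p) \<ge> 1"
  shows "weight \<Phi> (A \<union> B) \<omega> = weight \<Phi> A (restr Rs ar \<omega> A) * weight \<Phi> B (restr Rs ar \<omega> B)
     * (\<Prod>S\<in>Pow (A \<union> B) - Pow A - Pow B. kweight \<Phi> (card S) S (restr Rs ar \<omega> S))"
proof -
  let ?g = "\<lambda>S. G \<Phi> S (restr Rs ar \<omega> S)"
  let ?M = "Pow (A \<union> B) - Pow A - Pow B"
  have fM: "finite ?M" using fA fB by auto
  have e: "Pow (A \<union> B) = Pow A \<union> ((Pow B - {{}}) \<union> ?M)" by auto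
  have "sum ?g (Pow (A \<union> B)) = sum ?g (Pow A) + (sum ?g (Pow B - {{}}) + sum ?g ?M)"
  proof -
    have d1: "(Pow B - {{}}) \<inter> ?M = {}" by auto
    have d2: "Pow A \<inter> ((Pow B - {{}}) \<union> ?M) = {}" using AB by auto
    have f1: "finite (Pow B - {{}})" "finite (Pow A)" using fA fB by auto
    have "sum ?g ((Pow B - {{}}) \<union> ?M) = sum ?g (Pow B - {{}}) + sum ?g ?M"
      by (rule sum.union_disjoint[OF f1(1) fM d1])
    moreover have "sum ?g (Pow A \<union> ((Pow B - {{}}) \<union> ?M)) = sum ?g (Pow A) + sum ?g ((Pow B - {{}}) \<union> ?M)"
      by (rule sum.union_disjoint[OF f1(2) _ d2]) (use f1 fM in auto)
    ultimately show ?thesis unfolding e[symmetric] by simp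
  qed
  also have "sum ?g (Pow B - {{}}) = sum ?g (Pow B)"
    using sum.remove[of "Pow B" "{}" ?g] fB G_empty[OF ar1] by simp
  also have "sum ?g (Pow A) = (\<Sum>S\<in>Pow A. G \<Phi> S (restr Rs ar (restr Rs ar \<omega> A) S))"
    by (rule sum.cong) (auto simp: restr_restr)
  also have "sum ?g (Pow B) = (\<Sum>S\<in>Pow B. G \<Phi> S (restr Rs ar (restr Rs ar \<omega> B) S))"
    by (rule sum.cong) (auto simp: restr_restr)
  finally have "sum ?g (Pow (A \<union> B)) = (\<Sum>S\<in>Pow A. G \<Phi> S (restr Rs ar (restr Rs ar \<omega> A) S))
     + ((\<Sum>S\<in>Pow B. G \<Phi> S (restr Rs ar (restr Rs ar \<omega> B) S)) + sum ?g ?M)" .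
  moreover have fAB: "finite (A \<union> B)" using fA fB by simp
  ultimately show ?thesis
    unfolding weight_decomp[OF P fAB om] weight_decomp[OF P fA restr_sub] weight_decomp[OF P fB restr_sub]
    using fA fB by (simp add: exp_add exp_sum[OF fM] kweight_G)
qed

lemma finite_ga: "finite Rs \<Longrightarrow> finite D \<Longrightarrow> finite (ground_atoms Rs ar D)"
proof -
  assume "finite Rs" "finite D"
  then have "finite (Sigma Rs (\<lambda>R. {xs. set xs \<subseteq> D \<and> length xs = ar R}))"
    by (intro finite_SigmaI finite_lists_length_eq) auto
  moreover have "ground_atoms Rs ar D \<subseteq> Sigma Rs (\<lambda>R. {xs. set xs \<subseteq> D \<and> length xs = ar R})"
    by (auto simp: ground_atoms_def)
  ultimately show ?thesis by (rule finite_subset[rotated])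
qed

lemma finite_interps: "finite Rs \<Longrightarrow> finite D \<Longrightarrow> finite (interps Rs ar D)"
  by (simp add: interps_def finite_ga)

lemma kweight_pos: "kweight \<Phi> k D \<nu> > 0"
  by (simp add: kweight_def weight_def)

lemma wmin_pos:
  assumes "finite Rs" shows "wmin Rs ar \<Phi> k > 0"
proof -
  have f: "finite (kweight \<Phi> k {1..k} ` interps Rs ar {1..k})" using assms finite_interps by auto
  have ne: "kweight \<Phi> k {1..k} ` interps Rs ar {1..k} \<noteq> {}" by (auto simp: interps_def)
  show ?thesis unfolding wmin_def using Min_in[OF f ne] kweight_pos by auto
qed

lemma kweight_bounds:
  assumes R: "finite Rs" and S: "finite S" and nu: "\<nu> \<in> interps Rs ar S"
  shows "wmin Rs ar \<Phi> (card S) \<le> kweight \<Phi> (card S) S \<nu> \<and> kweight \<Phi> (card S) S \<nu> \<le> wmax Rs ar \<Phi> (card S)"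
proof -
  let ?k = "card S"
  obtain h where h: "bij_betw h S {1..?k}"
    using finite_same_card_bij[OF S, of "{1..?k}"] by auto
  have hi: "inj_on h S" and hS: "h ` S = {1..?k}" using h by (auto simp: bij_betw_def)
  have nu': "\<nu> \<subseteq> ground_atoms Rs ar S" using nu by (auto simp: interps_def)
  have "kweight \<Phi> ?k S \<nu> = kweight \<Phi> ?k {1..?k} (ren h \<nu>)"
    unfolding kweight_def using weight_ren[OF hi nu', of "Phi_k \<Phi> ?k"] hS by simp
  moreover have "ren h \<nu> \<in> interps Rs ar {1..?k}"
    using bij_betw_apply[OF ren_bij[OF hi] nu] hS by simp
  moreover have "finite (kweight \<Phi> ?k {1..?k} ` interps Rs ar {1..?k})" using R finite_interps by auto
  ultimately show ?thesis unfolding wmin_def wmax_def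
    by (auto intro: Min_le Max_ge)
qed

lemma count_mixed:
  assumes fA: "finite A" and fB: "finite B" and AB: "A \<inter> B = {}" and k: "k \<ge> 1"
  shows "card {S \<in> Pow (A \<union> B) - Pow A - Pow B. card S = k}
       = (card A + card B choose k) - (card A choose k) - (card B choose k)"
proof -
  let ?X = "{S. S \<subseteq> A \<union> B \<and> card S = k}"
  let ?Y = "{S. S \<subseteq> A \<and> card S = k}"
  let ?Z = "{S. S \<subseteq> B \<and> card S = k}"
  have e: "{S \<in> Pow (A \<union> B) - Pow A - Pow B. card S = k} = ?X - ?Y - ?Z" by auto
  have fX: "finite ?X" using fA fB by auto
  have YX: "?Y \<subseteq> ?X" and ZXY: "?Z \<subseteq> ?X - ?Y"
  proof -
    show "?Y \<subseteq> ?X" by auto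
    { fix S assume "S \<subseteq> B" "card S = k" "S \<subseteq> A"
      then have "S = {}" using AB by auto
      with \<open>card S = k\<close> k have False by simp }
    then show "?Z \<subseteq> ?X - ?Y" by auto
  qed
  have "card (?X - ?Y - ?Z) = card (?X - ?Y) - card ?Z"
    using ZXY fX by (intro card_Diff_subset) (auto intro: finite_subset)
  also have "card (?X - ?Y) = card ?X - card ?Y"
    using YX fX by (intro card_Diff_subset) (auto intro: finite_subset)
  finally show ?thesis unfolding e
    using n_subsets[OF fA] n_subsets[OF fB] n_subsets[of "A \<union> B"] fA fB AB
    by (simp add: card_Un_disjoint)
qed

lemma prod_mixed:
  fixes w :: "nat \<Rightarrow> real"
  assumes fA: "finite A" and fB: "finite B" and AB: "A \<inter> B = {}"
  shows "(\<Prod>S\<in>Pow (A \<union> B) - Pow A - Pow B. if card S \<le> d then w (card S) else 1)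
       = (\<Prod>k\<in>{1..d}. w k ^ ((card A + card B choose k) - (card A choose k) - (card B choose k)))"
proof -
  let ?M = "Pow (A \<union> B) - Pow A - Pow B"
  let ?M' = "{S \<in> ?M. card S \<le> d}"
  have fM: "finite ?M" using fA fB by auto
  have "(\<Prod>S\<in>?M. if card S \<le> d then w (card S) else 1) = (\<Prod>S\<in>?M'. w (card S))"
    by (rule prod.inter_filter[OF fM, symmetric])
  also have "\<dots> = (\<Prod>k\<in>{1..d}. \<Prod>S\<in>{S. S \<in> ?M' \<and> card S = k}. w (card S))"
  proof (rule prod.group[symmetric])
    show "finite ?M'" by (rule finite_subset[OF _ fM]) auto
    show "finite {1..d}" by simp
    show "card ` ?M' \<subseteq> {1..d}"
    proof
      fix x assume "x \<in> card ` ?M'"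
      then obtain S where S: "S \<in> ?M'" "x = card S" by auto
      have "S \<noteq> {}" using S by auto
      moreover have "finite S" using S fA fB by (auto intro: finite_subset)
      ultimately show "x \<in> {1..d}" using S by (auto simp: Suc_le_eq card_gt_0_iff)
    qed
  qed
  also have "\<dots> = (\<Prod>k\<in>{1..d}. w k ^ ((card A + card B choose k) - (card A choose k) - (card B choose k)))"
  proof (rule prod.cong[OF refl])
    fix k assume k: "k \<in> {1..d}"
    have "(\<Prod>S\<in>{S. S \<in> ?M' \<and> card S = k}. w (card S)) = (\<Prod>S\<in>{S \<in> ?M. card S = k}. w k)"
      using k by (intro prod.cong) auto
    also have "\<dots> = w k ^ card {S \<in> ?M. card S = k}" by simp
    finally show "(\<Prod>S\<in>{S. S \<in> ?M' \<and> card S = k}. w (card S)) = w k ^ ((card A + card B choose k) - (card A choose k) - (card B choose k))"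
      using count_mixed[OF fA fB AB, of k] k by simp
  qed
  finally show ?thesis .
qed

lemma kweight_big: "finite \<Phi> \<Longrightarrow> k > max_arity \<Phi> \<Longrightarrow> kweight \<Phi> k S \<nu> = 1"
  by (simp add: kweight_def weight_def Phi_k_big)

lemma ga_disj:
  assumes "\<forall>R\<in>Rs. ar R \<ge> 1" "A \<inter> B = {}"
  shows "ground_atoms Rs ar A \<inter> ground_atoms Rs ar B = {}"
proof -
  { fix R xs assume "R \<in> Rs" "length xs = ar R" "set xs \<subseteq> A" "set xs \<subseteq> B"
    then have "set xs \<subseteq> A \<inter> B" by (simp only: Int_greatest)
    then have "set xs = {}" using assms(2) by (simp only: subset_empty)
    then have "xs = []" by simp
    with \<open>R \<in> Rs\<close> \<open>length xs = ar R\<close> assms(1) have False by auto }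
  then show ?thesis by (auto simp: ground_atoms_def)
qed

lemma fiber_card:
  assumes ar1: "\<forall>R\<in>Rs. ar R \<ge> 1" and AB: "A \<inter> B = {}"
    and x: "x \<in> interps Rs ar A" and y: "y \<in> interps Rs ar B"
  shows "card {\<omega> \<in> interps Rs ar (A \<union> B). restr Rs ar \<omega> A = x \<and> restr Rs ar \<omega> B = y}
       = card {\<omega> \<in> interps Rs ar (A \<union> B). restr Rs ar \<omega> A = {} \<and> restr Rs ar \<omega> B = {}}"
proof (rule bij_betw_same_card[where f = "\<lambda>\<omega>. \<omega> - ground_atoms Rs ar A - ground_atoms Rs ar B"],
       rule bij_betw_byWitness[where f' = "\<lambda>\<nu>. \<nu> \<union> x \<union> y"])
  let ?GA = "ground_atoms Rs ar A" and ?GB = "ground_atoms Rs ar B" and ?GD = "ground_atoms Rs ar (A \<union> B)"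
  have d: "?GA \<inter> ?GB = {}" by (rule ga_disj[OF ar1 AB])
  have sA: "?GA \<subseteq> ?GD" and sB: "?GB \<subseteq> ?GD" by (auto simp: ground_atoms_def)
  have xA: "x \<subseteq> ?GA" and yB: "y \<subseteq> ?GB" using x y by (auto simp: interps_def)
  show "\<forall>a\<in>{\<omega> \<in> interps Rs ar (A \<union> B). restr Rs ar \<omega> A = x \<and> restr Rs ar \<omega> B = y}.
          a - ?GA - ?GB \<union> x \<union> y = a"
    by (auto simp: restr_def)
  show "\<forall>a\<in>{\<omega> \<in> interps Rs ar (A \<union> B). restr Rs ar \<omega> A = {} \<and> restr Rs ar \<omega> B = {}}.
          (a \<union> x \<union> y) - ?GA - ?GB = a"
    using xA yB by (auto simp: restr_def)
  show "(\<lambda>\<omega>. \<omega> - ?GA - ?GB) ` {\<omega> \<in> interps Rs ar (A \<union> B). restr Rs ar \<omega> A = x \<and> restr Rs ar \<omega> B = y}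
        \<subseteq> {\<omega> \<in> interps Rs ar (A \<union> B). restr Rs ar \<omega> A = {} \<and> restr Rs ar \<omega> B = {}}"
    by (auto simp: restr_def interps_def)
  show "(\<lambda>\<nu>. \<nu> \<union> x \<union> y) ` {\<omega> \<in> interps Rs ar (A \<union> B). restr Rs ar \<omega> A = {} \<and> restr Rs ar \<omega> B = {}}
        \<subseteq> {\<omega> \<in> interps Rs ar (A \<union> B). restr Rs ar \<omega> A = x \<and> restr Rs ar \<omega> B = y}"
    using xA yB sA sB d by (auto simp: restr_def interps_def)
qed

theorem proposition3:
  fixes Rs :: "'r set" and ar :: "'r \<Rightarrow> nat" and \<Phi> :: "('r fo \<times> real) set" and n m :: nat
  assumes "finite Rs"
    and "\<forall>R\<in>Rs. ar R \<ge> 1"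
    and "finite \<Phi>"
    and "\<forall>p\<in>\<Phi>. wf_fo Rs ar (fst p)"
    and "\<forall>p\<in>\<Phi>. farity (fst p) \<ge> 1"
    and "n \<ge> 1" and "m \<ge> 1"
  shows "Mmin Rs ar \<Phi> n m * real (Cnm Rs ar n m) * Zpart Rs ar \<Phi> n * Zpart Rs ar \<Phi> m
           \<le> Zpart Rs ar \<Phi> (n + m)
       \<and> Zpart Rs ar \<Phi> (n + m)
           \<le> Zpart Rs ar \<Phi> n * Zpart Rs ar \<Phi> m * real (Cnm Rs ar n m) * Mmax Rs ar \<Phi> n m"
proof -
  note R = assms(1) and ar1 = assms(2) and P = assms(3) and f1 = assms(5)
  define A where "A = {1..n}"
  define B where "B = {n+1..n+m}"
  define d where "d = max_arity \<Phi>"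
  let ?M = "Pow (A \<union> B) - Pow A - Pow B"
  have fA: "finite A" and fB: "finite B" and AB: "A \<inter> B = {}" by (auto simp: A_def B_def)
  have D: "{1..n+m} = A \<union> B" by (auto simp: A_def B_def)
  have cA: "card A = n" and cB: "card B = m" by (auto simp: A_def B_def)
  let ?C = "real (Cnm Rs ar n m)"
  define wA where "wA = weight \<Phi> A"
  define wB where "wB = weight \<Phi> B"
  define PP where "PP = (\<lambda>\<omega>. \<Prod>S\<in>?M. kweight \<Phi> (card S) S (restr Rs ar \<omega> S))"
  have fM: "finite ?M" using fA fB by auto
  have wpos: "weight \<Phi> X \<nu> > 0" for X \<nu> by (simp add: weight_def)
  have Zsplit: "Zpart Rs ar \<Phi> (n + m) = (\<Sum>\<omega>\<in>interps Rs ar (A \<union> B).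
      wA (restr Rs ar \<omega> A) * wB (restr Rs ar \<omega> B) * PP \<omega>)"
    unfolding Zpart_def D wA_def wB_def PP_def
    by (rule sum.cong[OF refl], rule weight_split[OF P fA fB AB _ f1]) (auto simp: interps_def)
  have PPbounds: "Mmin Rs ar \<Phi> n m \<le> PP \<omega> \<and> PP \<omega> \<le> Mmax Rs ar \<Phi> n m"
    if om: "\<omega> \<in> interps Rs ar (A \<union> B)" for \<omega>
  proof -
    have fb: "(if card S \<le> d then wmin Rs ar \<Phi> (card S) else 1) \<le> kweight \<Phi> (card S) S (restr Rs ar \<omega> S)
        \<and> kweight \<Phi> (card S) S (restr Rs ar \<omega> S) \<le> (if card S \<le> d then wmax Rs ar \<Phi> (card S) else 1)"
      if S: "S \<in> ?M" for S
    proof (cases "card S \<le> d")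
      case True
      have "finite S" using S fA fB by (auto intro: finite_subset)
      moreover have "restr Rs ar \<omega> S \<in> interps Rs ar S" unfolding interps_def using restr_sub by blast
      ultimately show ?thesis using True kweight_bounds[OF R] by auto
    next
      case False
      then show ?thesis using kweight_big[OF P] by (simp add: d_def)
    qed
    have "Mmin Rs ar \<Phi> n m = (\<Prod>S\<in>?M. if card S \<le> d then wmin Rs ar \<Phi> (card S) else 1)"
      unfolding Mmin_def prod_mixed[OF fA fB AB] cA cB d_def ..
    also have "\<dots> \<le> PP \<omega>" unfolding PP_def
      by (rule prod_mono) (use fb wmin_pos[OF R] in \<open>auto intro: less_imp_le\<close>)
    finally have 1: "Mmin Rs ar \<Phi> n m \<le> PP \<omega>" .
    have "PP \<omega> \<le> (\<Prod>S\<in>?M. if card S \<le> d then wmax Rs ar \<Phi> (card S) else 1)" unfolding PP_def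
      by (rule prod_mono) (use fb kweight_pos in \<open>blast intro: less_imp_le\<close>)
    also have "\<dots> = Mmax Rs ar \<Phi> n m"
      unfolding Mmax_def prod_mixed[OF fA fB AB] cA cB d_def ..
    finally show ?thesis using 1 by simp
  qed
  have fIA: "finite (interps Rs ar A)" and fIB: "finite (interps Rs ar B)"
    and fID: "finite (interps Rs ar (A \<union> B))" using R fA fB by (auto intro: finite_interps)
  have group: "(\<Sum>\<omega>\<in>interps Rs ar (A \<union> B). wA (restr Rs ar \<omega> A) * wB (restr Rs ar \<omega> B))
      = ?C * (\<Sum>x\<in>interps Rs ar A. wA x) * (\<Sum>y\<in>interps Rs ar B. wB y)"
  proof -
    let ?g = "\<lambda>\<omega>. (restr Rs ar \<omega> A, restr Rs ar \<omega> B)"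
    let ?F = "\<lambda>(x, y). wA x * wB y"
    have img: "?g ` interps Rs ar (A \<union> B) \<subseteq> interps Rs ar A \<times> interps Rs ar B"
      unfolding interps_def using restr_sub by blast
    have "(\<Sum>\<omega>\<in>interps Rs ar (A \<union> B). wA (restr Rs ar \<omega> A) * wB (restr Rs ar \<omega> B))
        = (\<Sum>\<omega>\<in>interps Rs ar (A \<union> B). ?F (?g \<omega>))" by simp
    also have "\<dots> = (\<Sum>p\<in>interps Rs ar A \<times> interps Rs ar B. \<Sum>\<omega>\<in>{\<omega>. \<omega> \<in> interps Rs ar (A \<union> B) \<and> ?g \<omega> = p}. ?F (?g \<omega>))"
      by (rule sum.group[OF fID _ img, symmetric]) (use fIA fIB in auto)
    also have "\<dots> = (\<Sum>p\<in>interps Rs ar A \<times> interps Rs ar B. ?C * ?F p)"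
    proof (rule sum.cong[OF refl])
      fix p assume p: "p \<in> interps Rs ar A \<times> interps Rs ar B"
      obtain x y where xy: "p = (x, y)" "x \<in> interps Rs ar A" "y \<in> interps Rs ar B" using p by auto
      have "(\<Sum>\<omega>\<in>{\<omega>. \<omega> \<in> interps Rs ar (A \<union> B) \<and> ?g \<omega> = p}. ?F (?g \<omega>))
          = (\<Sum>\<omega>\<in>{\<omega>. \<omega> \<in> interps Rs ar (A \<union> B) \<and> ?g \<omega> = p}. ?F p)" by (rule sum.cong) auto
      also have "\<dots> = real (card {\<omega> \<in> interps Rs ar (A \<union> B). restr Rs ar \<omega> A = x \<and> restr Rs ar \<omega> B = y}) * ?F p"
        using xy by simp
      also have "card {\<omega> \<in> interps Rs ar (A \<union> B). restr Rs ar \<omega> A = x \<and> restr Rs ar \<omega> B = y} = Cnm Rs ar n m"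
        unfolding fiber_card[OF ar1 AB xy(2,3)] Cnm_def D A_def[symmetric] B_def[symmetric] ..
      finally show "(\<Sum>\<omega>\<in>{\<omega>. \<omega> \<in> interps Rs ar (A \<union> B) \<and> ?g \<omega> = p}. ?F (?g \<omega>)) = ?C * ?F p" .
    qed
    also have "\<dots> = ?C * (\<Sum>p\<in>interps Rs ar A \<times> interps Rs ar B. ?F p)" by (simp add: sum_distrib_left)
    also have "(\<Sum>p\<in>interps Rs ar A \<times> interps Rs ar B. ?F p) = (\<Sum>x\<in>interps Rs ar A. wA x) * (\<Sum>y\<in>interps Rs ar B. wB y)"
      by (simp add: sum_product sum.cartesian_product)
    finally show ?thesis by simp
  qed
  have ZA: "(\<Sum>x\<in>interps Rs ar A. wA x) = Zpart Rs ar \<Phi> n" by (simp add: Zpart_def wA_def A_def)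
  have ZB: "(\<Sum>y\<in>interps Rs ar B. wB y) = Zpart Rs ar \<Phi> m"
  proof -
    let ?h = "\<lambda>x::nat. x + n"
    have hi: "inj_on ?h {1..m}" by simp
    have hB: "?h ` {1..m} = B" unfolding B_def
      by (auto simp: image_iff intro!: bexI[where x = "_ - n"])
    have "(\<Sum>y\<in>interps Rs ar B. wB y) = (\<Sum>\<omega>\<in>interps Rs ar {1..m}. wB (ren ?h \<omega>))"
      using sum.reindex_bij_betw[OF ren_bij[OF hi], of wB] hB by simp
    also have "\<dots> = Zpart Rs ar \<Phi> m" unfolding Zpart_def wB_def
      by (rule sum.cong[OF refl]) (use weight_ren[OF hi] hB in \<open>auto simp: interps_def\<close>)
    finally show ?thesis .
  qed
  have nonneg: "0 \<le> wA (restr Rs ar \<omega> A) * wB (restr Rs ar \<omega> B)" for \<omega>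
    using wpos by (simp add: wA_def wB_def less_imp_le)
  have "Zpart Rs ar \<Phi> (n + m) \<le> (\<Sum>\<omega>\<in>interps Rs ar (A \<union> B).
      wA (restr Rs ar \<omega> A) * wB (restr Rs ar \<omega> B) * Mmax Rs ar \<Phi> n m)"
    unfolding Zsplit by (rule sum_mono) (use PPbounds nonneg in \<open>auto intro: mult_left_mono\<close>)
  also have "\<dots> = Zpart Rs ar \<Phi> n * Zpart Rs ar \<Phi> m * ?C * Mmax Rs ar \<Phi> n m"
    unfolding sum_distrib_right[symmetric] group ZA ZB by simp
  finally have up: "Zpart Rs ar \<Phi> (n + m) \<le> Zpart Rs ar \<Phi> n * Zpart Rs ar \<Phi> m * ?C * Mmax Rs ar \<Phi> n m" .
  have "Mmin Rs ar \<Phi> n m * ?C * Zpart Rs ar \<Phi> n * Zpart Rs ar \<Phi> m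
      = (\<Sum>\<omega>\<in>interps Rs ar (A \<union> B). wA (restr Rs ar \<omega> A) * wB (restr Rs ar \<omega> B) * Mmin Rs ar \<Phi> n m)"
    unfolding sum_distrib_right[symmetric] group ZA ZB by simp
  also have "\<dots> \<le> Zpart Rs ar \<Phi> (n + m)"
    unfolding Zsplit by (rule sum_mono) (use PPbounds nonneg in \<open>auto intro: mult_left_mono\<close>)
  finally show ?thesis using up by simp
qed
end
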